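(* Let $n\ge 13$ and let $CT_n$ be the set of chemical trees on $n$ vertices. For a tree $T$ write $\mathbf m(T)=(m_{3,3}(T),m_{2,3}(T),m_{1,2}(T),m_{1,3}(T),m_{2,2}(T))$. For $1\le i\le 13$ let $A_i$ be the set of trees $T\in CT_n$ with $\Delta(T)\le 3$, $n_3(T)\le 2$ and $\mathbf m(T)$ equal to the following vector: $A_1:(0,0,2,0,n-3)$; $A_2:(0,1,1,2,n-5)$; $A_3:(0,2,2,1,n-6)$; $A_4:(0,3,3,0,n-7)$; $A_5:(0,2,0,4,n-7)$; $A_6:(0,3,1,3,n-8)$; $A_7:(0,4,2,2,n-9)$; $A_8:(1,1,1,3,n-7)$; $A_9:(0,5,3,1,n-10)$; $A_{10}:(1,2,2,2,n-8)$; $A_{11}:(0,6,4,0,n-11)$; $A_{12}:(1,3,3,1,n-9)$; $A_{13}:(1,4,4,0,n-10)$. Let $\Omega(n)$ be the set of trees $T\in CT_n$ having $3$ vertices of degree $3$, $n-8$ vertices of degree $2$ and $5$ vertices of degree $1$, with $m_{1,2}(T)=m_{2,3}(T)=5$, $m_{1,3}(T)=0$, $m_{3,3}(T)=2$, $m_{2,2}(T)=n-13$. Let $T_1\in A_1$, $T_2\in A_4$, $T_3\in A_3$, $T_4\in A_2$, $T_5\in A_{13}$, $T_6\in A_{12}$, $T_7\in A_{11}$, $T_8\in A_{10}$, $T_9\in A_9$, $T_{10}\in A_8$, $T_{11}\in A_7$, $T_{12}\in A_6$, $T_{13}\in A_5$, $T_{14}\in\Omega(n)$, and let $T\in CT_n$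 not belong to $A_1\cup\cdots\cup A_{13}\cup\Omega(n)$. Then $SO_{red}(T_1)<SO_{red}(T_2)<\cdots<SO_{red}(T_{13})<SO_{red}(T_{14})<SO_{red}(T)$.
   Context: All graphs are simple and connected. A chemical graph is a graph with maximum degree at most $4$; a chemical tree is a chemical graph that is a tree. $d_G(u)$ is the degree of $u$, $\Delta(G)$ the maximum degree, $n_i(G)$ the number of vertices of degree $i$, and $m_{i,j}(G)$ the number of edges joining a vertex of degree $i$ to a vertex of degree $j$. The reduced Sombor index is $SO_{red}(G)=\sum_{uv\in E(G)}\sqrt{(d_G(u)-1)^2+(d_G(v)-1)^2}$. *)

theory Defs
  imports Complex_Main
begin

definition simple_graph :: "'a set \<Rightarrow> 'a set set \<Rightarrow> bool" where
  "simple_graph V E \<longleftrightarrow> finite V \<and>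
     (\<forall>e\<in>E. \<exists>u v. e = {u, v} \<and> u \<noteq> v \<and> u \<in> V \<and> v \<in> V)"

definition deg :: "'a set set \<Rightarrow> 'a \<Rightarrow> nat" where
  "deg E v = card {e\<in>E. v \<in> e}"

definition adj :: "'a set set \<Rightarrow> 'a \<Rightarrow> 'a \<Rightarrow> bool" where
  "adj E u v \<longleftrightarrow> {u, v} \<in> E"

definition connected_graph :: "'a set \<Rightarrow> 'a set set \<Rightarrow> bool" where
  "connected_graph V E \<longleftrightarrow> V \<noteq> {} \<and> (\<forall>u\<in>V. \<forall>v\<in>V. (adj E)\<^sup>*\<^sup>* u v)"

definition is_cycle :: "'a set set \<Rightarrow> 'a list \<Rightarrow> bool" where
  "is_cycle E xs \<longleftrightarrow> length xs \<ge> 3 \<and> distinct xs \<and>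
     (\<forall>i. Suc i < length xs \<longrightarrow> adj E (xs ! i) (xs ! Suc i)) \<and>
     adj E (last xs) (hd xs)"

definition is_tree :: "'a set \<Rightarrow> 'a set set \<Rightarrow> bool" where
  "is_tree V E \<longleftrightarrow> simple_graph V E \<and> connected_graph V E \<and>
     \<not> (\<exists>xs. set xs \<subseteq> V \<and> is_cycle E xs)"

definition chemical_tree :: "'a set \<Rightarrow> 'a set set \<Rightarrow> bool" where
  "chemical_tree V E \<longleftrightarrow> is_tree V E \<and> (\<forall>v\<in>V. deg E v \<le> 4)"

definition CT :: "nat \<Rightarrow> ('a set \<times> 'a set set) set" where
  "CT n = {(V, E). chemical_tree V E \<and> card V = n}"

definition nvert :: "'a set \<Rightarrow> 'a set set \<Rightarrow> nat \<Rightarrow> nat" where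
  "nvert V E i = card {v\<in>V. deg E v = i}"

definition medges :: "'a set set \<Rightarrow> nat \<Rightarrow> nat \<Rightarrow> nat" where
  "medges E i j = card {e\<in>E. \<exists>u v. e = {u, v} \<and> deg E u = i \<and> deg E v = j}"

definition maxdeg_le :: "'a set \<Rightarrow> 'a set set \<Rightarrow> nat \<Rightarrow> bool" where
  "maxdeg_le V E k \<longleftrightarrow> (\<forall>v\<in>V. deg E v \<le> k)"

text \<open>Reduced Sombor index; for an edge e = {u,v} the summand is
  sqrt((d(u)-1)^2 + (d(v)-1)^2), written via the max and min of the endpoint degrees.\<close>
definition SO_red :: "'a set \<Rightarrow> 'a set set \<Rightarrow> real" where
  "SO_red V E = (\<Sum>e\<in>E. sqrt ((real (Max (deg E ` e)) - 1)\<^sup>2 + (real (Min (deg E ` e)) - 1)\<^sup>2))"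

definition mvec :: "'a set set \<Rightarrow> nat \<times> nat \<times> nat \<times> nat \<times> nat" where
  "mvec E = (medges E 3 3, medges E 2 3, medges E 1 2, medges E 1 3, medges E 2 2)"

definition avec :: "nat \<Rightarrow> nat \<Rightarrow> nat \<times> nat \<times> nat \<times> nat \<times> nat" where
  "avec n i = [(0,0,2,0,n-3), (0,1,1,2,n-5), (0,2,2,1,n-6), (0,3,3,0,n-7),
               (0,2,0,4,n-7), (0,3,1,3,n-8), (0,4,2,2,n-9), (1,1,1,3,n-7),
               (0,5,3,1,n-10), (1,2,2,2,n-8), (0,6,4,0,n-11), (1,3,3,1,n-9),
               (1,4,4,0,n-10)] ! (i - 1)"

definition Aset :: "nat \<Rightarrow> nat \<Rightarrow> ('a set \<times> 'a set set) set" where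
  "Aset n i = {(V, E). (V, E) \<in> CT n \<and> maxdeg_le V E 3 \<and> nvert V E 3 \<le> 2 \<and>
                       mvec E = avec n i}"

definition Omega :: "nat \<Rightarrow> ('a set \<times> 'a set set) set" where
  "Omega n = {(V, E). (V, E) \<in> CT n \<and> nvert V E 3 = 3 \<and> nvert V E 2 = n - 8 \<and>
                nvert V E 1 = 5 \<and> medges E 1 2 = 5 \<and> medges E 2 3 = 5 \<and>
                medges E 1 3 = 0 \<and> medges E 3 3 = 2 \<and> medges E 2 2 = n - 13}"

end

theory Submission
  imports Defs
begin


definition wpath :: "'a set set \<Rightarrow> 'a list \<Rightarrow> bool" where
  "wpath E xs \<longleftrightarrow> (\<forall>i. Suc i < length xs \<longrightarrow> adj E (xs ! i) (xs ! Suc i))"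

lemma cycle_exists:
  assumes fin: "finite W" and ne: "W \<noteq> {}"
    and nb: "\<forall>w\<in>W. \<exists>a\<in>W. \<exists>b\<in>W. a \<noteq> b \<and> adj E w a \<and> adj E w b"
    and noloop: "\<forall>x. \<not> adj E x x"
  shows "\<exists>xs. set xs \<subseteq> W \<and> is_cycle E xs"
proof -
  define P where "P xs \<longleftrightarrow> xs \<noteq> [] \<and> distinct xs \<and> set xs \<subseteq> W \<and> wpath E xs" for xs
  obtain w0 where "w0 \<in> W" using ne by auto
  then have P0: "P [w0]" by (simp add: P_def wpath_def)
  have bnd: "\<forall>y. P y \<longrightarrow> length y < Suc (card W)"
  proof (intro allI impI)
    fix y assume "P y"
    then have "card (set y) \<le> card W" using fin by (intro card_mono) (auto simp: P_def)
    moreover have "card (set y) = length y" using \<open>P y\<close> by (simp add: P_def distinct_card)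
    ultimately show "length y < Suc (card W)" by simp
  qed
  obtain xs where Pxs: "P xs" and mx: "\<forall>y. P y \<longrightarrow> length y \<le> length xs"
    using ex_has_greatest_nat[of P "[w0]" length, OF P0 bnd] by blast
  define k where "k = length xs"
  define x where "x = last xs"
  have k1: "k \<ge> 1" using Pxs by (simp add: P_def k_def Suc_le_eq)
  have xW: "x \<in> W" using Pxs by (auto simp: P_def x_def)
  have ext: "c \<in> set xs" if "c \<in> W" "adj E x c" for c
  proof (rule ccontr)
    assume cn: "c \<notin> set xs"
    have "P (xs @ [c])"
      unfolding P_def wpath_def
    proof (intro conjI allI impI)
      show "xs @ [c] \<noteq> []" by simp
      show "distinct (xs @ [c])" using Pxs cn by (simp add: P_def)
      show "set (xs @ [c]) \<subseteq> W" using Pxs that by (auto simp: P_def)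
      fix i assume i: "Suc i < length (xs @ [c])"
      show "adj E ((xs @ [c]) ! i) ((xs @ [c]) ! Suc i)"
      proof (cases "Suc i < length xs")
        case True
        then show ?thesis using Pxs by (simp add: P_def wpath_def nth_append)
      next
        case False
        then have "i = length xs - 1" using i by simp
        then have "(xs @ [c]) ! i = x" "(xs @ [c]) ! Suc i = c"
          using Pxs False i by (auto simp: P_def x_def nth_append last_conv_nth)
        then show ?thesis using that by simp
      qed
    qed
    then have "length (xs @ [c]) \<le> length xs" using mx by blast
    then show False by simp
  qed
  obtain a b where ab: "a \<in> W" "b \<in> W" "a \<noteq> b" "adj E x a" "adj E x b" using nb xW by blast
  have aS: "a \<in> set xs" and bS: "b \<in> set xs" using ext ab by auto
  have k2: "k \<ge> 2"
  proof (rule ccontr)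
    assume "\<not> k \<ge> 2"
    then have "k = 1" using k1 by simp
    then obtain y where "xs = [y]" using k_def by (cases xs) auto
    then show False using aS ab(4) noloop x_def by auto
  qed
  obtain c where c: "c \<in> set xs" "adj E x c" "c \<noteq> xs ! (k - 2)"
    using aS bS ab by metis
  obtain j where j: "j < k" "xs ! j = c" using c(1) by (auto simp: in_set_conv_nth k_def)
  have xk: "xs ! (k - 1) = x" using Pxs by (simp add: x_def k_def last_conv_nth P_def)
  have "c \<noteq> x" using c(2) noloop by auto
  then have "j \<noteq> k - 1" using j xk by auto
  moreover have "j \<noteq> k - 2" using j c by auto
  ultimately have j3: "j + 3 \<le> k" using j by linarith
  define ys where "ys = drop j xs"
  have "is_cycle E ys"
    unfolding is_cycle_def
  proof (intro conjI allI impI)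
    show "3 \<le> length ys" using j3 by (simp add: ys_def k_def)
    show "distinct ys" using Pxs by (simp add: ys_def P_def)
    fix i assume "Suc i < length ys"
    then have "Suc (j + i) < length xs" by (simp add: ys_def)
    then show "adj E (ys ! i) (ys ! Suc i)" using Pxs by (simp add: ys_def P_def wpath_def)
  next
    have "last ys = x" using j by (simp add: ys_def x_def k_def)
    moreover have "hd ys = c" using j by (simp add: ys_def k_def hd_drop_conv_nth)
    ultimately show "adj E (last ys) (hd ys)" using c by simp
  qed
  moreover have "set ys \<subseteq> W" using Pxs set_drop_subset[of j xs] by (auto simp: ys_def P_def)
  ultimately show ?thesis by blast
qed

lemma rtc_cross:
  assumes "(adj E)\<^sup>*\<^sup>* u v" "u \<in> S" "v \<notin> S"
  shows "\<exists>a b. adj E a b \<and> a \<in> S \<and> b \<notin> S"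
  using assms
proof (induction rule: rtranclp_induct)
  case base then show ?case by simp
next
  case (step y z)
  then show ?case by (cases "y \<in> S") auto
qed



definition dlo :: "'a set set \<Rightarrow> 'a set \<Rightarrow> nat" where "dlo E e = Min (deg E ` e)"
definition dhi :: "'a set set \<Rightarrow> 'a set \<Rightarrow> nat" where "dhi E e = Max (deg E ` e)"
definition mc :: "'a set set \<Rightarrow> nat \<Rightarrow> nat \<Rightarrow> nat" where
  "mc E i j = card {e\<in>E. dlo E e = i \<and> dhi E e = j}"

locale ctr =
  fixes V :: "'a set" and E :: "'a set set" and n :: nat
  assumes inCT: "(V, E) \<in> CT n" and n13: "13 \<le> n"
begin

lemma tree: "is_tree V E" and chem: "\<And>v. v \<in> V \<Longrightarrow> deg E v \<le> 4" and cardV: "card V = n"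
  using inCT by (auto simp: CT_def chemical_tree_def)

lemma simple: "simple_graph V E" and conn: "connected_graph V E"
  and nocyc: "\<And>xs. set xs \<subseteq> V \<Longrightarrow> \<not> is_cycle E xs"
  using tree by (auto simp: is_tree_def)

lemma finV: "finite V" using simple by (simp add: simple_graph_def)

lemma edge: "e \<in> E \<Longrightarrow> \<exists>u v. e = {u, v} \<and> u \<noteq> v \<and> u \<in> V \<and> v \<in> V"
  using simple by (simp add: simple_graph_def)

lemma EPow: "E \<subseteq> Pow V"
proof
  fix e assume "e \<in> E"
  then obtain u v where "e = {u, v}" "u \<in> V" "v \<in> V" using edge by blast
  then show "e \<in> Pow V" by auto
qed

lemma finE: "finite E" using finite_subset[OF EPow] finV by simp

lemma noloop: "\<not> adj E x x"
proof
  assume "adj E x x"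
  then have "{x} \<in> E" by (simp add: adj_def)
  then obtain u v where "{x} = {u, v}" "u \<noteq> v" using edge by blast
  then show False by (metis insertI1 insert_commute singletonD)
qed

lemma L:
  assumes "S \<subseteq> V" "S \<noteq> V"
  shows "card S \<le> card {e\<in>E. e \<inter> S \<noteq> {}}"
proof -
  have "finite S" using assms finV finite_subset by blast
  then show ?thesis using assms
  proof (induction S rule: finite_psubset_induct)
    case (psubset S)
    show ?case
    proof (cases "S = {}")
      case True then show ?thesis by simp
    next
      case False
      then obtain u where u: "u \<in> S" by auto
      obtain v where v: "v \<in> V" "v \<notin> S" using psubset.prems by auto
      have "(adj E)\<^sup>*\<^sup>* u v" using conn u v psubset.prems by (auto simp: connected_graph_def)
      then obtain a b where ab: "adj E a b" "a \<in> S" "b \<notin> S" using rtc_cross u v by metis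
      have sub: "S - {a} \<subset> S" using ab by auto
      have IH: "card (S - {a}) \<le> card {e\<in>E. e \<inter> (S - {a}) \<noteq> {}}"
        using psubset.IH[OF sub] psubset.prems by auto
      have ins: "insert {a, b} {e\<in>E. e \<inter> (S - {a}) \<noteq> {}} \<subseteq> {e\<in>E. e \<inter> S \<noteq> {}}"
        using ab by (auto simp: adj_def)
      have nin: "{a, b} \<notin> {e\<in>E. e \<inter> (S - {a}) \<noteq> {}}" using ab by auto
      have "card S = Suc (card (S - {a}))" using ab psubset.hyps
        by (metis card_Suc_Diff1)
      also have "\<dots> \<le> Suc (card {e\<in>E. e \<inter> (S - {a}) \<noteq> {}})" using IH by simp
      also have "\<dots> = card (insert {a, b} {e\<in>E. e \<inter> (S - {a}) \<noteq> {}})"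
        using nin finE by simp
      also have "\<dots> \<le> card {e\<in>E. e \<inter> S \<noteq> {}}" using ins finE by (intro card_mono) auto
      finally show ?thesis .
    qed
  qed
qed

lemma A:
  assumes "W \<subseteq> V" "W \<noteq> {}"
  shows "card {e\<in>E. e \<subseteq> W} < card W"
proof -
  have "finite W" using assms finV finite_subset by blast
  then show ?thesis using assms
  proof (induction W rule: finite_psubset_induct)
    case (psubset W)
    show ?case
    proof (cases "\<exists>w\<in>W. card {e\<in>E. e \<subseteq> W \<and> w \<in> e} \<le> 1")
      case True
      then obtain w where w: "w \<in> W" "card {e\<in>E. e \<subseteq> W \<and> w \<in> e} \<le> 1" by blast
      show ?thesis
      proof (cases "W = {w}")
        case True
        have "{e\<in>E. e \<subseteq> W} = {}"
        proof (rule ccontr)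
          assume "{e\<in>E. e \<subseteq> W} \<noteq> {}"
          then obtain e where e: "e \<in> E" "e \<subseteq> {w}" using True by auto
          then obtain u v where "e = {u, v}" "u \<noteq> v" using edge by blast
          then show False using e by auto
        qed
        then show ?thesis using True by simp
      next
        case False
        have sub: "W - {w} \<subset> W" using w by auto
        have ne: "W - {w} \<noteq> {}" using False w by auto
        have IH: "card {e\<in>E. e \<subseteq> W - {w}} < card (W - {w})"
          using psubset.IH[OF sub] psubset.prems ne by auto
        have "{e\<in>E. e \<subseteq> W} \<subseteq> {e\<in>E. e \<subseteq> W - {w}} \<union> {e\<in>E. e \<subseteq> W \<and> w \<in> e}" by auto
        then have "card {e\<in>E. e \<subseteq> W} \<le> card ({e\<in>E. e \<subseteq> W - {w}} \<union> {e\<in>E. e \<subseteq> W \<and> w \<in> e})"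
          using finE by (intro card_mono) auto
        also have "\<dots> \<le> card {e\<in>E. e \<subseteq> W - {w}} + card {e\<in>E. e \<subseteq> W \<and> w \<in> e}"
          by (rule card_Un_le)
        finally have "card {e\<in>E. e \<subseteq> W} < card (W - {w}) + 1" using IH w by linarith
        moreover have "card (W - {w}) + 1 = card W" using w psubset.hyps
          by (metis Suc_eq_plus1 card_Suc_Diff1)
        ultimately show ?thesis by simp
      qed
    next
      case False
      have nb: "\<forall>w\<in>W. \<exists>a\<in>W. \<exists>b\<in>W. a \<noteq> b \<and> adj E w a \<and> adj E w b"
      proof
        fix w assume w: "w \<in> W"
        let ?X = "{e\<in>E. e \<subseteq> W \<and> w \<in> e}"
        have "\<not> card ?X \<le> Suc 0" using False w by simp
        moreover have "finite ?X" using finE by simp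
        ultimately have "\<not> (\<forall>a1\<in>?X. \<forall>a2\<in>?X. a1 = a2)" by (simp add: card_le_Suc0_iff_eq)
        then obtain e1 e2 where e12: "e1 \<in> ?X" "e2 \<in> ?X" "e1 \<noteq> e2" by blast
        have oth: "\<exists>a. e = {w, a} \<and> a \<in> W" if eX: "e \<in> ?X" for e
        proof -
          have "e \<in> E" using eX by simp
          then obtain u v where uv: "e = {u, v}" "u \<noteq> v" using edge by blast
          have "w \<in> e" "e \<subseteq> W" using eX by auto
          then show ?thesis using uv by (cases "w = u") auto
        qed
        obtain a where a: "e1 = {w, a}" "a \<in> W" using oth[OF e12(1)] by blast
        obtain b where b: "e2 = {w, b}" "b \<in> W" using oth[OF e12(2)] by blast
        have "a \<noteq> b" using a(1) b(1) e12(3) by auto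
        moreover have "adj E w a" using a(1) e12(1) by (simp add: adj_def)
        moreover have "adj E w b" using b(1) e12(2) by (simp add: adj_def)
        ultimately show "\<exists>a\<in>W. \<exists>b\<in>W. a \<noteq> b \<and> adj E w a \<and> adj E w b" using a b by blast
      qed
      obtain xs where xs: "set xs \<subseteq> W" "is_cycle E xs"
        using cycle_exists[OF psubset.hyps psubset.prems(2) nb] noloop by blast
      have "set xs \<subseteq> V" using xs(1) psubset.prems(1) by (rule subset_trans)
      then show ?thesis using nocyc xs(2) by blast
    qed
  qed
qed

end


definition Wt :: "nat \<Rightarrow> nat \<Rightarrow> real" where
  "Wt i j = sqrt ((real j - 1)\<^sup>2 + (real i - 1)\<^sup>2)"

lemma sum4: "(\<Sum>i\<in>{1..4::nat}. g i) = g 1 + g 2 + g 3 + g 4"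
proof -
  have "{1..4::nat} = {1,2,3,4}" by auto
  then show ?thesis by (simp add: add.assoc)
qed

context ctr
begin

lemma deg_pos: assumes "v \<in> V" shows "1 \<le> deg E v"
proof -
  have "{v} \<noteq> V" using cardV n13 by auto
  then have "card {v} \<le> card {e\<in>E. e \<inter> {v} \<noteq> {}}" using L assms by blast
  moreover have "{e\<in>E. e \<inter> {v} \<noteq> {}} = {e\<in>E. v \<in> e}" by auto
  ultimately show ?thesis by (simp add: deg_def)
qed

lemma dd_edge: "dlo E {u, v} = min (deg E u) (deg E v)" "dhi E {u, v} = max (deg E u) (deg E v)"
  by (simp_all add: dlo_def dhi_def)

lemma cls: assumes "e \<in> E" shows "1 \<le> dlo E e" "dlo E e \<le> dhi E e" "dhi E e \<le> 4"
proof -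
  obtain u v where uv: "e = {u, v}" "u \<noteq> v" "u \<in> V" "v \<in> V" using edge assms by blast
  show "1 \<le> dlo E e" "dlo E e \<le> dhi E e" "dhi E e \<le> 4"
    using uv deg_pos[of u] deg_pos[of v] chem[of u] chem[of v] by (auto simp: dd_edge)
qed

lemma class_sum:
  "(\<Sum>e\<in>E. (F (dlo E e) (dhi E e) :: 'b::comm_semiring_1)) =
   (\<Sum>i\<in>{1..4}. \<Sum>j\<in>{1..4}. of_nat (mc E i j) * F i j)"
proof -
  let ?g = "\<lambda>e. (dlo E e, dhi E e)"
  have rng: "?g ` E \<subseteq> {1..4} \<times> {1..4}" using cls by fastforce
  have "(\<Sum>e\<in>E. F (dlo E e) (dhi E e)) =
        (\<Sum>p\<in>{1..4} \<times> {1..4}. \<Sum>e\<in>{e\<in>E. ?g e = p}. F (dlo E e) (dhi E e))"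
    using sum.group[OF finE _ rng, of "\<lambda>e. F (dlo E e) (dhi E e)"] by simp
  also have "\<dots> = (\<Sum>p\<in>{1..4} \<times> {1..4}. of_nat (mc E (fst p) (snd p)) * F (fst p) (snd p))"
  proof (rule sum.cong[OF refl])
    fix p :: "nat \<times> nat"
    obtain i j where p: "p = (i, j)" by (cases p)
    have seteq: "{e\<in>E. ?g e = p} = {e\<in>E. dlo E e = i \<and> dhi E e = j}" using p by auto
    have "(\<Sum>e\<in>{e\<in>E. ?g e = p}. F (dlo E e) (dhi E e)) = (\<Sum>e\<in>{e\<in>E. dlo E e = i \<and> dhi E e = j}. F i j)"
      unfolding seteq by (rule sum.cong) auto
    also have "\<dots> = of_nat (mc E i j) * F i j" by (simp add: mc_def)
    finally show "(\<Sum>e\<in>{e\<in>E. ?g e = p}. F (dlo E e) (dhi E e)) = of_nat (mc E (fst p) (snd p)) * F (fst p) (snd p)"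
      using p by simp
  qed
  also have "\<dots> = (\<Sum>i\<in>{1..4}. \<Sum>j\<in>{1..4}. of_nat (mc E i j) * F i j)"
    by (simp add: sum.cartesian_product case_prod_beta')
  finally show ?thesis .
qed

lemma mc_low: assumes "j < i" shows "mc E i j = 0"
proof -
  have "{e\<in>E. dlo E e = i \<and> dhi E e = j} = {}"
  proof (rule ccontr)
    assume "{e\<in>E. dlo E e = i \<and> dhi E e = j} \<noteq> {}"
    then obtain e where "e \<in> E" "dlo E e = i" "dhi E e = j" by blast
    then show False using cls(2)[of e] assms by simp
  qed
  then show ?thesis unfolding mc_def by (simp only: card.empty)
qed

lemma mc_low': "mc E 2 1 = 0" "mc E 3 1 = 0" "mc E 4 1 = 0" "mc E 3 2 = 0" "mc E 4 2 = 0" "mc E 4 3 = 0"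
  by (simp_all add: mc_low)

lemma class_sum10:
  "(\<Sum>e\<in>E. (F (dlo E e) (dhi E e) :: 'b::comm_semiring_1)) =
    of_nat (mc E 1 1) * F 1 1 + of_nat (mc E 1 2) * F 1 2 + of_nat (mc E 1 3) * F 1 3 + of_nat (mc E 1 4) * F 1 4
  + of_nat (mc E 2 2) * F 2 2 + of_nat (mc E 2 3) * F 2 3 + of_nat (mc E 2 4) * F 2 4
  + of_nat (mc E 3 3) * F 3 3 + of_nat (mc E 3 4) * F 3 4 + of_nat (mc E 4 4) * F 4 4"
  unfolding class_sum sum4 mc_low' by (simp add: algebra_simps)

lemma card_class: "card {e\<in>E. P (dlo E e) (dhi E e)} = (\<Sum>e\<in>E. (if P (dlo E e) (dhi E e) then 1 else 0 :: nat))"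
  using finE by (simp add: sum.If_cases Int_def)

lemma medges_eq: assumes "i \<le> j" shows "medges E i j = mc E i j"
proof -
  have "{e\<in>E. \<exists>u v. e = {u, v} \<and> deg E u = i \<and> deg E v = j} = {e\<in>E. dlo E e = i \<and> dhi E e = j}"
  proof (rule Collect_cong, rule iffI)
    fix e assume "e \<in> E \<and> (\<exists>u v. e = {u, v} \<and> deg E u = i \<and> deg E v = j)"
    then show "e \<in> E \<and> dlo E e = i \<and> dhi E e = j" using assms by (auto simp: dd_edge)
  next
    fix e assume h: "e \<in> E \<and> dlo E e = i \<and> dhi E e = j"
    then obtain u v where uv: "e = {u, v}" using edge by blast
    show "e \<in> E \<and> (\<exists>u v. e = {u, v} \<and> deg E u = i \<and> deg E v = j)"
    proof (cases "deg E u \<le> deg E v")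
      case True then show ?thesis using h uv by (auto simp: dd_edge)
    next
      case False
      then have "e = {v, u} \<and> deg E v = i \<and> deg E u = j" using h uv by (auto simp: dd_edge)
      then show ?thesis using h by blast
    qed
  qed
  then show ?thesis by (simp add: medges_def mc_def)
qed

lemma handshake:
  "i * nvert V E i = (\<Sum>e\<in>E. (if dlo E e = i then 1 else 0) + (if dhi E e = i then 1 else 0))"
proof -
  let ?Vi = "{v\<in>V. deg E v = i}"
  have fVi: "finite ?Vi" using finV by simp
  have "i * nvert V E i = (\<Sum>v\<in>?Vi. deg E v)" by (simp add: nvert_def)
  also have "\<dots> = (\<Sum>v\<in>?Vi. \<Sum>e\<in>E. if v \<in> e then 1 else 0)"
    using finE by (simp add: deg_def sum.If_cases Int_def)
  also have "\<dots> = (\<Sum>e\<in>E. \<Sum>v\<in>?Vi. if v \<in> e then 1 else 0)" by (rule sum.swap)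
  also have "\<dots> = (\<Sum>e\<in>E. (if dlo E e = i then 1 else 0) + (if dhi E e = i then 1 else 0))"
  proof (rule sum.cong[OF refl])
    fix e assume "e \<in> E"
    then obtain a b where ab: "e = {a, b}" "a \<noteq> b" "a \<in> V" "b \<in> V" using edge by blast
    have "(\<Sum>v\<in>?Vi. if v \<in> e then 1 else 0) = card {v\<in>?Vi. v \<in> e}"
      using fVi by (simp add: sum.If_cases Int_def)
    also have "{v\<in>?Vi. v \<in> e} = (if deg E a = i then {a} else {}) \<union> (if deg E b = i then {b} else {})"
      using ab by auto
    also have "card \<dots> = (if deg E a = i then 1 else 0) + (if deg E b = i then 1 else 0)"
      using ab by auto
    also have "\<dots> = (if dlo E e = i then 1 else 0) + (if dhi E e = i then 1 else 0)"
      using ab by (auto simp: dd_edge min_def max_def)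
    finally show "(\<Sum>v\<in>?Vi. if v \<in> e then 1 else 0) = (if dlo E e = i then 1 else 0) + (if dhi E e = i then 1 else (0::nat))" .
  qed
  finally show ?thesis .
qed

lemma HV: "n = nvert V E 1 + nvert V E 2 + nvert V E 3 + nvert V E 4"
proof -
  have rng: "deg E ` V \<subseteq> {1..4}" using deg_pos chem by auto
  have "n = (\<Sum>v\<in>V. 1::nat)" using cardV by simp
  also have "\<dots> = (\<Sum>i\<in>{1..4}. \<Sum>v\<in>{v\<in>V. deg E v = i}. 1)"
    using sum.group[OF finV _ rng, of "\<lambda>_. 1::nat"] by simp
  also have "\<dots> = (\<Sum>i\<in>{1..4}. nvert V E i)" by (simp add: nvert_def)
  finally show ?thesis unfolding sum4 .
qed

lemma cardE: "card E + 1 = n"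
proof -
  have "{e\<in>E. e \<subseteq> V} = E" using EPow by auto
  moreover have "V \<noteq> {}" using cardV n13 by auto
  ultimately have "card E < card V" using A[of V] by simp
  moreover obtain v where v: "v \<in> V" using cardV n13 by fastforce
  have "card (V - {v}) \<le> card {e\<in>E. e \<inter> (V - {v}) \<noteq> {}}" using v by (intro L) auto
  moreover have "card {e\<in>E. e \<inter> (V - {v}) \<noteq> {}} \<le> card E" using finE by (intro card_mono) auto
  moreover have "card (V - {v}) = n - 1" using v cardV finV by simp
  ultimately show ?thesis using cardV by linarith
qed

end


context ctr
begin

abbreviation "m \<equiv> mc E"
abbreviation "nv \<equiv> nvert V E"

lemma H: "nv 1 = 2 * m 1 1 + m 1 2 + m 1 3 + m 1 4"
  "2 * nv 2 = m 1 2 + 2 * m 2 2 + m 2 3 + m 2 4"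
  "3 * nv 3 = m 1 3 + m 2 3 + 2 * m 3 3 + m 3 4"
  "4 * nv 4 = m 1 4 + m 2 4 + m 3 4 + 2 * m 4 4"
  using handshake[of 1] handshake[of 2] handshake[of 3] handshake[of 4]
  unfolding class_sum10[where F="\<lambda>a b. (if a = _ then 1 else 0) + (if b = _ then 1 else 0)"]
  by simp_all

lemma HE: "n = Suc (m 1 1 + m 1 2 + m 1 3 + m 1 4 + m 2 2 + m 2 3 + m 2 4 + m 3 3 + m 3 4 + m 4 4)"
proof -
  have "card E = (\<Sum>e\<in>E. (1::nat))" by simp
  also have "\<dots> = m 1 1 + m 1 2 + m 1 3 + m 1 4 + m 2 2 + m 2 3 + m 2 4 + m 3 3 + m 3 4 + m 4 4"
    using class_sum10[where F="\<lambda>a b. 1::nat"] by simp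
  finally show ?thesis using cardE by simp
qed

lemma edge_meets: assumes "e \<in> E" "S = {v\<in>V. deg E v \<le> k}"
  shows "e \<inter> S \<noteq> {} \<longleftrightarrow> dlo E e \<le> k"
proof -
  obtain a b where ab: "e = {a, b}" "a \<in> V" "b \<in> V" using edge assms by blast
  show ?thesis using ab assms(2) by (auto simp: dd_edge)
qed

lemma L1: assumes "nv 1 < n" shows "nv 1 \<le> m 1 1 + m 1 2 + m 1 3 + m 1 4"
proof -
  let ?S = "{v\<in>V. deg E v \<le> 1}"
  have S1: "?S = {v\<in>V. deg E v = 1}" using deg_pos by force
  have "?S \<noteq> V" using assms cardV S1 by (auto simp: nvert_def)
  then have "card ?S \<le> card {e\<in>E. e \<inter> ?S \<noteq> {}}" by (intro L) auto
  also have "{e\<in>E. e \<inter> ?S \<noteq> {}} = {e\<in>E. dlo E e \<le> 1}" using edge_meets[of _ ?S 1] by blast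
  also have "card \<dots> = m 1 1 + m 1 2 + m 1 3 + m 1 4"
    unfolding card_class[where P="\<lambda>a b. a \<le> 1"]
    using class_sum10[where F="\<lambda>a b. if a \<le> 1 then 1 else (0::nat)"] by simp
  finally show ?thesis using S1 by (simp add: nvert_def)
qed

lemma L12: assumes "nv 1 + nv 2 < n"
  shows "nv 1 + nv 2 \<le> m 1 1 + m 1 2 + m 1 3 + m 1 4 + m 2 2 + m 2 3 + m 2 4"
proof -
  let ?S = "{v\<in>V. deg E v \<le> 2}"
  have S1: "?S = {v\<in>V. deg E v = 1} \<union> {v\<in>V. deg E v = 2}" using deg_pos by force
  have cS: "card ?S = nv 1 + nv 2" unfolding S1 nvert_def
    by (rule card_Un_disjoint) (use finV in auto)
  have "?S \<noteq> V" using assms cardV cS by auto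
  then have "card ?S \<le> card {e\<in>E. e \<inter> ?S \<noteq> {}}" by (intro L) auto
  also have "{e\<in>E. e \<inter> ?S \<noteq> {}} = {e\<in>E. dlo E e \<le> 2}" using edge_meets[of _ ?S 2] by blast
  also have "card \<dots> = m 1 1 + m 1 2 + m 1 3 + m 1 4 + m 2 2 + m 2 3 + m 2 4"
    unfolding card_class[where P="\<lambda>a b. a \<le> 2"]
    using class_sum10[where F="\<lambda>a b. if a \<le> 2 then 1 else (0::nat)"] by simp
  finally show ?thesis using cS by simp
qed

lemma A2: assumes "0 < nv 2" shows "m 2 2 < nv 2"
proof -
  let ?W = "{v\<in>V. deg E v = 2}"
  have "?W \<noteq> {}" using assms by (auto simp: nvert_def card_gt_0_iff)
  then have "card {e\<in>E. e \<subseteq> ?W} < card ?W" by (intro A) auto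
  moreover have "{e\<in>E. e \<subseteq> ?W} = {e\<in>E. dlo E e = 2 \<and> dhi E e = 2}"
  proof (rule Collect_cong, rule iffI)
    fix e assume h: "e \<in> E \<and> e \<subseteq> ?W"
    then obtain a b where ab: "e = {a, b}" using edge by blast
    then show "e \<in> E \<and> dlo E e = 2 \<and> dhi E e = 2" using h by (auto simp: dd_edge)
  next
    fix e assume h: "e \<in> E \<and> dlo E e = 2 \<and> dhi E e = 2"
    then obtain a b where ab: "e = {a, b}" "a \<in> V" "b \<in> V" using edge by blast
    then show "e \<in> E \<and> e \<subseteq> ?W" using h by (auto simp: dd_edge min_def max_def split: if_splits)
  qed
  ultimately show ?thesis by (simp add: mc_def nvert_def)
qed

lemma SO: "SO_red V E = real (m 1 2) + 2 * real (m 1 3) + 3 * real (m 1 4) + sqrt 2 * real (m 2 2)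
   + sqrt 5 * real (m 2 3) + sqrt 10 * real (m 2 4) + sqrt 8 * real (m 3 3) + sqrt 13 * real (m 3 4)
   + sqrt 18 * real (m 4 4)"
proof -
  have "SO_red V E = (\<Sum>e\<in>E. Wt (dlo E e) (dhi E e))" by (simp add: SO_red_def Wt_def dlo_def dhi_def)
  also have "\<dots> = real (m 1 2) + 2 * real (m 1 3) + 3 * real (m 1 4) + sqrt 2 * real (m 2 2)
   + sqrt 5 * real (m 2 3) + sqrt 10 * real (m 2 4) + sqrt 8 * real (m 3 3) + sqrt 13 * real (m 3 4)
   + sqrt 18 * real (m 4 4)"
    unfolding class_sum10 by (simp add: Wt_def power2_eq_square algebra_simps)
  finally show ?thesis .
qed

lemma maxdeg3: "maxdeg_le V E 3 \<longleftrightarrow> nv 4 = 0"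
proof -
  have "nv 4 = 0 \<longleftrightarrow> {v\<in>V. deg E v = 4} = {}" using finV by (simp add: nvert_def)
  also have "\<dots> \<longleftrightarrow> maxdeg_le V E 3" using chem by (force simp: maxdeg_le_def)
  finally show ?thesis by simp
qed

end


lemma sq_bounds: "14142/10000 < sqrt 2" "sqrt 2 < 14143/10000" "22360/10000 < sqrt 5" "sqrt 5 < 22361/10000"
  "31622/10000 < sqrt 10" "sqrt 10 < 31623/10000" "36055/10000 < sqrt 13"
  "sqrt 8 = 2 * sqrt 2" "sqrt 18 = 3 * sqrt 2"
proof -
  show "14142/10000 < sqrt 2" by (rule real_less_rsqrt) (simp add: power2_eq_square)
  show "sqrt 2 < 14143/10000" by (rule real_less_lsqrt) (simp_all add: power2_eq_square)
  show "22360/10000 < sqrt 5" by (rule real_less_rsqrt) (simp add: power2_eq_square)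
  show "sqrt 5 < 22361/10000" by (rule real_less_lsqrt) (simp_all add: power2_eq_square)
  show "31622/10000 < sqrt 10" by (rule real_less_rsqrt) (simp add: power2_eq_square)
  show "sqrt 10 < 31623/10000" by (rule real_less_lsqrt) (simp_all add: power2_eq_square)
  show "36055/10000 < sqrt 13" by (rule real_less_rsqrt) (simp add: power2_eq_square)
  have "sqrt 8 = sqrt (2\<^sup>2 * 2)" by simp
  then show "sqrt 8 = 2 * sqrt 2" by (simp only: real_sqrt_mult real_sqrt_abs)
  have "sqrt 18 = sqrt (3\<^sup>2 * 2)" by simp
  then show "sqrt 18 = 3 * sqrt 2" by (simp only: real_sqrt_mult real_sqrt_abs)
qed

lemma cert_iii:
  fixes s r q q13 m12 m13 m14 m22 m23 m24 m33 m34 m44 :: real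
  assumes b: "14142/10000 < s" "s < 14143/10000" "22360/10000 < r" "r < 22361/10000" "31622/10000 < q" "q < 31623/10000" "36055/10000 < q13"
    and nn: "0 \<le> m12" "0 \<le> m13" "0 \<le> m14" "0 \<le> m22" "0 \<le> m23" "0 \<le> m24" "0 \<le> m33" "0 \<le> m34" "0 \<le> m44"
    and c1: "m12 \<le> m23 + m24" and c2: "4 \<le> m14 + m24 + m34 + 2 * m44"
  shows "m12 + 2 * m13 + 3 * m14 + s * m22 + r * m23 + q * m24 + 2 * s * m33 + q13 * m34 + 3 * s * m44
     > 5 + 5 * r + (m12 + m13 + m14 + m22 + m23 + m24 + m33 + m34 + m44 - 8) * s"
proof -
  have id: "m12 + 2 * m13 + 3 * m14 + s * m22 + r * m23 + q * m24 + 2 * s * m33 + q13 * m34 + 3 * s * m44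
     - (m12 + m13 + m14 + m22 + m23 + m24 + m33 + m34 + m44) * s
   = (q - 2*s + 1)*(m14+m24+m34+2*m44) + (r - 2*s + 1)*m23 + (2 - s)*m13 + (2 + s - q)*m14 + s*m33
     + (q13 - q + s - 1)*m34 + (6*s - 2*q - 2)*m44 + (s - 1)*(m23+m24-m12)"
    by (simp add: algebra_simps)
  have t1: "(q - 2*s + 1)*(m14+m24+m34+2*m44) \<ge> (q - 2*s + 1) * 4"
    using c2 b by (intro mult_left_mono) auto
  have t2: "(r - 2*s + 1)*m23 \<ge> 0" using b nn by (intro mult_nonneg_nonneg) auto
  have t3: "(2 - s)*m13 \<ge> 0" using b nn by (intro mult_nonneg_nonneg) auto
  have t4: "(2 + s - q)*m14 \<ge> 0" using b nn by (intro mult_nonneg_nonneg) auto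
  have t5: "s*m33 \<ge> 0" using b nn by (intro mult_nonneg_nonneg) auto
  have t6: "(q13 - q + s - 1)*m34 \<ge> 0" using b nn by (intro mult_nonneg_nonneg) auto
  have t7: "(6*s - 2*q - 2)*m44 \<ge> 0" using b nn by (intro mult_nonneg_nonneg) auto
  have t8: "(s - 1)*(m23+m24-m12) \<ge> 0" using b c1 by (intro mult_nonneg_nonneg) auto
  have "4*q - 8*s + 4 > 5 + 5 * r - 8 * s" using b by linarith
  then have "(q - 2*s + 1) * 4 > 5 + 5 * r - 8 * s" by (simp add: algebra_simps)
  then show ?thesis using id t1 t2 t3 t4 t5 t6 t7 t8 by (simp add: algebra_simps)
qed

lemma cert_ii:
  fixes s r nt pa pb pc pd pe :: real
  assumes b: "14142/10000 < s" "s < 14143/10000" "22360/10000 < r" "r < 22361/10000"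
    and nn: "0 \<le> pb" "3 \<le> nt"
    and e1: "pa + pb = 2 + nt" and e2: "3 * nt = pb + pd + 2 * pe" and c1: "pa \<le> pd"
  shows "pa + 2 * pb + s * pc + r * pd + 2 * s * pe > 5 + 5 * r + (pa + pb + pc + pd + pe - 8) * s
     \<or> (nt = 3 \<and> pb = 0 \<and> pd = pa)"
proof -
  have pa: "pa = 2 + nt - pb" using e1 by simp
  have pe: "pe = (3 * nt - pb - pd) / 2" using e2 by simp
  have id: "pa + 2 * pb + s * pc + r * pd + 2 * s * pe
     - (5 + 5 * r + (pa + pb + pc + pd + pe - 8) * s)
     = (r - s + 1)*(nt-3) + (1 - r + s)*pb + (r - 3/2*s)*(pd - pa)"
    unfolding pa pe by (simp add: field_simps)
  have p1: "(r - s + 1)*(nt-3) \<ge> 0" "(1 - r + s)*pb \<ge> 0" "(r - 3/2*s)*(pd - pa) \<ge> 0"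
    using b nn c1 by (auto intro!: mult_nonneg_nonneg)
  have p2: "nt > 3 \<Longrightarrow> (r - s + 1)*(nt-3) > 0" "pb > 0 \<Longrightarrow> (1 - r + s)*pb > 0"
        "pd > pa \<Longrightarrow> (r - 3/2*s)*(pd - pa) > 0"
    using b by (auto intro!: mult_pos_pos)
  show ?thesis
  proof (cases "nt = 3 \<and> pb = 0 \<and> pd = pa")
    case True then show ?thesis by simp
  next
    case False
    then have "nt > 3 \<or> pb > 0 \<or> pd > pa" using nn c1 by auto
    then have "(r - s + 1)*(nt-3) + (1 - r + s)*pb + (r - 3/2*s)*(pd - pa) > 0"
      using p1 p2 by auto
    then show ?thesis using id by simp
  qed
qed

lemma cov_nat: fixes N n1 n2 n3 m12 m13 m22 m23 m33 :: nat
  assumes c: "n3 \<le> 2" and e1: "m12 + m13 = 2 + n3" and e2: "3*n3 = m13 + m23 + 2*m33"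
   and c1: "0 < n3 \<Longrightarrow> m12 \<le> m23" and a2: "0 < n2 \<Longrightarrow> m22 < n2" and hv: "N = n1 + n2 + n3"
   and h2: "2*n2 = m12 + 2*m22 + m23" and n13: "13 \<le> N" and n1: "n1 = 2 + n3"
  shows "(n3 = 0 \<and> m33 = 0 \<and> m13 = 0) \<or>
      (n3 = 1 \<and> m33 = 0 \<and> m13 = 0) \<or> (n3 = 1 \<and> m33 = 0 \<and> m13 = 1) \<or>
      (n3 = 1 \<and> m33 = 0 \<and> m13 = 2) \<or>
      (n3 = 2 \<and> m33 = 1 \<and> m13 = 0) \<or> (n3 = 2 \<and> m33 = 1 \<and> m13 = 1) \<or>
      (n3 = 2 \<and> m33 = 1 \<and> m13 = 2) \<or> (n3 = 2 \<and> m33 = 1 \<and> m13 = 3) \<or>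
      (n3 = 2 \<and> m33 = 0 \<and> m13 = 0) \<or> (n3 = 2 \<and> m33 = 0 \<and> m13 = 1) \<or>
      (n3 = 2 \<and> m33 = 0 \<and> m13 = 2) \<or> (n3 = 2 \<and> m33 = 0 \<and> m13 = 3) \<or>
      (n3 = 2 \<and> m33 = 0 \<and> m13 = 4)"
proof -
  have v2: "0 < n2" using hv n1 c n13 by linarith
  have m22: "m22 < n2" using a2 v2 by simp
  consider "n3 = 0" | "n3 = 1" | "n3 = 2" using c by arith
  then show ?thesis
  proof cases
    case 1
    then have "m33 = 0" "m13 = 0" using e2 by simp_all
    then show ?thesis using 1 by simp
  next
    case 2
    note h = 2
    then have q: "m33 = 0" using e1 e2 c1 by simp
    have "m13 \<le> 2"
    proof (rule ccontr)
      assume "\<not> m13 \<le> 2"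
      then show False using h q e1 e2 h2 m22 by linarith
    qed
    then have "m13 = 0 \<or> m13 = 1 \<or> m13 = 2" by arith
    then show ?thesis using h q by auto
  next
    case 3
    note h = 3
    then have q: "m33 \<le> 1" using e1 e2 c1 by simp
    have r4: "m13 \<le> 4" using h e1 by simp
    have r3: "m33 = 1 \<Longrightarrow> m13 \<le> 3"
    proof (rule ccontr)
      assume "m33 = 1" "\<not> m13 \<le> 3"
      then show False using h e1 e2 h2 m22 by linarith
    qed
    have "m33 = 0 \<or> m33 = 1" using q by arith
    moreover have "m13 = 0 \<or> m13 = 1 \<or> m13 = 2 \<or> m13 = 3 \<or> m13 = 4" using r4 by arith
    ultimately show ?thesis using h r3 by auto
  qed
qed


context ctr
begin

lemma me: "medges E 1 2 = m 1 2" "medges E 1 3 = m 1 3" "medges E 2 2 = m 2 2"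
  "medges E 2 3 = m 2 3" "medges E 3 3 = m 3 3"
  by (simp_all add: medges_eq)

lemma me': "medges E (Suc 0) 2 = m (Suc 0) 2" "medges E (Suc 0) 3 = m (Suc 0) 3"
  by (simp_all add: medges_eq)

lemma nf1: "nv 1 = 2 + nv 3 + 2 * nv 4" using H HE HV by linarith

lemma nf_m11: "m 1 1 = 0"
proof -
  have "nv 1 < n" using nf1 HV n13 by linarith
  then show ?thesis using L1 H(1) by linarith
qed

lemma nf_mle: assumes "0 < nv 3 + nv 4" shows "m 1 2 \<le> m 2 3 + m 2 4"
proof -
  have "nv 1 + nv 2 < n" using HV assms by linarith
  then show ?thesis using L12 H(1) H(2) by linarith
qed

lemma zero4: assumes "nv 4 = 0" shows "m 1 4 = 0" "m 2 4 = 0" "m 3 4 = 0" "m 4 4 = 0"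
  using H(4) assms by simp_all

lemma Aform: assumes "maxdeg_le V E 3"
  shows "SO_red V E = real (medges E 1 2) + 2 * real (medges E 1 3) + sqrt 2 * real (medges E 2 2)
     + sqrt 5 * real (medges E 2 3) + 2 * sqrt 2 * real (medges E 3 3)"
  using SO zero4[OF assms[unfolded maxdeg3]] sq_bounds(8) by (simp add: me me')

lemma Oform: assumes "(V, E) \<in> Omega n"
  shows "SO_red V E = 5 + 5 * sqrt 5 + 4 * sqrt 2 + (real n - 13) * sqrt 2"
proof -
  have o: "nv 3 = 3" "nv 2 = n - 8" "nv 1 = 5" "m 1 2 = 5" "m 2 3 = 5" "m 1 3 = 0" "m 3 3 = 2"
    "m 2 2 = n - 13"
    using assms by (auto simp: Omega_def me me')
  have "nv 4 = 0" using HV o n13 by linarith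
  note z = zero4[OF this]
  have "real (n - 13) = real n - 13" using n13 by simp
  then show ?thesis using SO z o sq_bounds(8) by (simp add: algebra_simps)
qed

lemma final:
  assumes nin: "(V, E) \<notin> (\<Union>i\<in>{1..13}. Aset n i) \<union> Omega n"
  shows "SO_red V E > 5 + 5 * sqrt 5 + 4 * sqrt 2 + (real n - 13) * sqrt 2"
proof -
  note sb = sq_bounds
  have HEr: "real n = 1 + real (m 1 2) + real (m 1 3) + real (m 1 4) + real (m 2 2) + real (m 2 3)
     + real (m 2 4) + real (m 3 3) + real (m 3 4) + real (m 4 4)"
    using HE nf_m11 by simp
  have goalr: "5 + 5 * sqrt 5 + 4 * sqrt 2 + (real n - 13) * sqrt 2 =
     5 + 5 * sqrt 5 + (real (m 1 2) + real (m 1 3) + real (m 1 4) + real (m 2 2) + real (m 2 3)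
     + real (m 2 4) + real (m 3 3) + real (m 3 4) + real (m 4 4) - 8) * sqrt 2"
    unfolding HEr by (simp add: algebra_simps)
  have SOr: "SO_red V E = real (m 1 2) + 2 * real (m 1 3) + 3 * real (m 1 4) + sqrt 2 * real (m 2 2)
   + sqrt 5 * real (m 2 3) + sqrt 10 * real (m 2 4) + 2 * sqrt 2 * real (m 3 3) + sqrt 13 * real (m 3 4)
   + 3 * sqrt 2 * real (m 4 4)" using SO sb(8,9) by simp
  consider (a) "1 \<le> nv 4" | (b) "nv 4 = 0" "3 \<le> nv 3" | (c) "nv 4 = 0" "nv 3 \<le> 2" by linarith
  then show ?thesis
  proof cases
    case a
    have c1: "m 1 2 \<le> m 2 3 + m 2 4" using nf_mle a by simp
    have c2: "4 \<le> m 1 4 + m 2 4 + m 3 4 + 2 * m 4 4" using H(4) a by linarith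
    have "real (m 1 2) \<le> real (m 2 3) + real (m 2 4)" using c1 by linarith
    moreover have "4 \<le> real (m 1 4) + real (m 2 4) + real (m 3 4) + 2 * real (m 4 4)" using c2 by linarith
    ultimately have "SO_red V E > 5 + 5 * sqrt 5 + (real (m 1 2) + real (m 1 3) + real (m 1 4) + real (m 2 2) + real (m 2 3)
     + real (m 2 4) + real (m 3 3) + real (m 3 4) + real (m 4 4) - 8) * sqrt 2"
      unfolding SOr by (intro cert_iii) (use sb in auto)
    then show ?thesis using goalr by simp
  next
    case b
    note z = zero4[OF b(1)]
    have c1: "m 1 2 \<le> m 2 3" using nf_mle[of] b z by simp
    have e1: "m 1 2 + m 1 3 = 2 + nv 3" using nf1 H(1) nf_m11 b z by simp
    have e2: "3 * nv 3 = m 1 3 + m 2 3 + 2 * m 3 3" using H(3) z by simp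
    let ?s = "sqrt 2" and ?r = "sqrt 5"
    have pre: "14142/10000 < ?s" "?s < 14143/10000" "22360/10000 < ?r" "?r < 22361/10000"
        "0 \<le> real (m 1 3)" "3 \<le> real (nv 3)"
        "real (m 1 2) + real (m 1 3) = 2 + real (nv 3)"
        "3 * real (nv 3) = real (m 1 3) + real (m 2 3) + 2 * real (m 3 3)"
        "real (m 1 2) \<le> real (m 2 3)"
      using sb b e1 e2 c1 by linarith+
    note C = cert_ii[where pc="real (m 2 2)", OF pre]
    have SOb: "SO_red V E = real (m 1 2) + 2 * real (m 1 3) + ?s * real (m 2 2) + ?r * real (m 2 3) + 2 * ?s * real (m 3 3)"
      using SOr z by simp
    have gb: "5 + 5 * sqrt 5 + 4 * sqrt 2 + (real n - 13) * sqrt 2 =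
      5 + 5 * ?r + (real (m 1 2) + real (m 1 3) + real (m 2 2) + real (m 2 3) + real (m 3 3) - 8) * ?s"
      using goalr z by simp
    show ?thesis
    proof (cases "nv 3 = 3 \<and> m 1 3 = 0 \<and> m 2 3 = m 1 2")
      case True
      have o: "nv 1 = 5" "m 1 2 = 5" "m 2 3 = 5" "m 3 3 = 2" "nv 2 = n - 8" "m 2 2 = n - 13"
        using True nf1 b e1 e2 HV H(2) z by linarith+
      have "(V, E) \<in> Omega n" using inCT True o by (simp add: Omega_def me me')
      then show ?thesis using nin by blast
    next
      case False
      then have "\<not> (real (nv 3) = 3 \<and> real (m 1 3) = 0 \<and> real (m 2 3) = real (m 1 2))" by simp
      then show ?thesis using C SOb gb by auto
    qed
  next
    case c
    note z = zero4[OF c(1)]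
    have e1: "m 1 2 + m 1 3 = 2 + nv 3" using nf1 H(1) nf_m11 c z by simp
    have e2: "3 * nv 3 = m 1 3 + m 2 3 + 2 * m 3 3" using H(3) z by simp
    have c1: "0 < nv 3 \<Longrightarrow> m 1 2 \<le> m 2 3" using nf_mle z c by simp
    have a2: "0 < nv 2 \<Longrightarrow> m 2 2 < nv 2" by (rule A2)
    have hv: "n = nv 1 + nv 2 + nv 3" using HV c by simp
    have h2: "2 * nv 2 = m 1 2 + 2 * m 2 2 + m 2 3" using H(2) z by simp
    have he: "n = Suc (m 1 2 + m 1 3 + m 2 2 + m 2 3 + m 3 3)" using HE z nf_m11 by simp
    have cov: "(nv 3 = 0 \<and> m 3 3 = 0 \<and> m 1 3 = 0) \<or>
      (nv 3 = 1 \<and> m 3 3 = 0 \<and> m 1 3 = 0) \<or> (nv 3 = 1 \<and> m 3 3 = 0 \<and> m 1 3 = 1) \<or>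
      (nv 3 = 1 \<and> m 3 3 = 0 \<and> m 1 3 = 2) \<or>
      (nv 3 = 2 \<and> m 3 3 = 1 \<and> m 1 3 = 0) \<or> (nv 3 = 2 \<and> m 3 3 = 1 \<and> m 1 3 = 1) \<or>
      (nv 3 = 2 \<and> m 3 3 = 1 \<and> m 1 3 = 2) \<or> (nv 3 = 2 \<and> m 3 3 = 1 \<and> m 1 3 = 3) \<or>
      (nv 3 = 2 \<and> m 3 3 = 0 \<and> m 1 3 = 0) \<or> (nv 3 = 2 \<and> m 3 3 = 0 \<and> m 1 3 = 1) \<or>
      (nv 3 = 2 \<and> m 3 3 = 0 \<and> m 1 3 = 2) \<or> (nv 3 = 2 \<and> m 3 3 = 0 \<and> m 1 3 = 3) \<or>
      (nv 3 = 2 \<and> m 3 3 = 0 \<and> m 1 3 = 4)"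
    proof -
      have n1: "nv 1 = 2 + nv 3" using nf1 c by simp
      show ?thesis by (rule cov_nat[OF c(2) e1 e2 c1 a2 hv h2 n13 n1])
    qed
    have g1: "m 1 2 = 2 + nv 3 - m 1 3" using e1 by simp
    have g2: "m 2 3 = 3 * nv 3 - m 1 3 - 2 * m 3 3" using e2 by simp
    have g3: "m 2 2 = n - 1 - m 1 2 - m 1 3 - m 2 3 - m 3 3" using he by simp
    have tup: "mvec E = (m 3 3, m 2 3, m 1 2, m 1 3, m 2 2)" by (simp add: mvec_def me me')
    have "mvec E = avec n 1 \<or> mvec E = avec n 2 \<or> mvec E = avec n 3 \<or> mvec E = avec n 4 \<or>
          mvec E = avec n 5 \<or> mvec E = avec n 6 \<or> mvec E = avec n 7 \<or> mvec E = avec n 8 \<or>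
          mvec E = avec n 9 \<or> mvec E = avec n 10 \<or> mvec E = avec n 11 \<or> mvec E = avec n 12 \<or>
          mvec E = avec n 13"
      unfolding tup g3 g2 g1 using cov by (elim disjE) (simp_all add: avec_def)
    moreover have "maxdeg_le V E 3" using c maxdeg3 by simp
    ultimately have "(V, E) \<in> (\<Union>i\<in>{1..13}. Aset n i)"
      using inCT c by (simp add: Aset_def) (elim disjE; force)
    then show ?thesis using nin by blast
  qed
qed

end


lemma Aval:
  assumes "(V, E) \<in> Aset n k" "13 \<le> n" "avec n k = (a, b, c, d, e)"
  shows "SO_red V E = real c + 2 * real d + sqrt 2 * real e + sqrt 5 * real b + 2 * sqrt 2 * real a"
proof -
  have AS: "(V, E) \<in> CT n" "maxdeg_le V E 3" "mvec E = (a, b, c, d, e)" using assms by (auto simp: Aset_def)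
  interpret ctr V E n using AS(1) assms(2) by unfold_locales
  show ?thesis using Aform[OF AS(2)] AS(3) by (simp add: mvec_def)
qed

theorem theorem3p4:
  fixes n :: nat and V1 V2 V3 V4 V5 V6 V7 V8 V9 V10 V11 V12 V13 V14 V :: "'a set"
    and E1 E2 E3 E4 E5 E6 E7 E8 E9 E10 E11 E12 E13 E14 E :: "'a set set"
  assumes "n \<ge> 13"
    and "(V1, E1) \<in> Aset n 1" and "(V2, E2) \<in> Aset n 4" and "(V3, E3) \<in> Aset n 3"
    and "(V4, E4) \<in> Aset n 2" and "(V5, E5) \<in> Aset n 13" and "(V6, E6) \<in> Aset n 12"
    and "(V7, E7) \<in> Aset n 11" and "(V8, E8) \<in> Aset n 10" and "(V9, E9) \<in> Aset n 9"
    and "(V10, E10) \<in> Aset n 8" and "(V11, E11) \<in> Aset n 7" and "(V12, E12) \<in> Aset n 6"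
    and "(V13, E13) \<in> Aset n 5" and "(V14, E14) \<in> Omega n"
    and "(V, E) \<in> CT n"
    and "(V, E) \<notin> (\<Union>i\<in>{1..13}. Aset n i) \<union> Omega n"
  shows "SO_red V1 E1 < SO_red V2 E2 \<and> SO_red V2 E2 < SO_red V3 E3 \<and>
         SO_red V3 E3 < SO_red V4 E4 \<and> SO_red V4 E4 < SO_red V5 E5 \<and>
         SO_red V5 E5 < SO_red V6 E6 \<and> SO_red V6 E6 < SO_red V7 E7 \<and>
         SO_red V7 E7 < SO_red V8 E8 \<and> SO_red V8 E8 < SO_red V9 E9 \<and>
         SO_red V9 E9 < SO_red V10 E10 \<and> SO_red V10 E10 < SO_red V11 E11 \<and>
         SO_red V11 E11 < SO_red V12 E12 \<and> SO_red V12 E12 < SO_red V13 E13 \<and>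
         SO_red V13 E13 < SO_red V14 E14 \<and> SO_red V14 E14 < SO_red V E"
proof -
  have v1: "SO_red V1 E1 = sqrt 2 * real n + (2 + 0 * sqrt 5 + 0 * sqrt 2 - 3 * sqrt 2)"
    using Aval[OF assms(2) assms(1), of 0 0 2 0 "n - 3"] assms(1)
    by (simp add: avec_def of_nat_diff algebra_simps)
  have v2: "SO_red V2 E2 = sqrt 2 * real n + (3 + 3 * sqrt 5 + 0 * sqrt 2 - 7 * sqrt 2)"
    using Aval[OF assms(3) assms(1), of 0 3 3 0 "n - 7"] assms(1)
    by (simp add: avec_def of_nat_diff algebra_simps)
  have v3: "SO_red V3 E3 = sqrt 2 * real n + (4 + 2 * sqrt 5 + 0 * sqrt 2 - 6 * sqrt 2)"
    using Aval[OF assms(4) assms(1), of 0 2 2 1 "n - 6"] assms(1)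
    by (simp add: avec_def of_nat_diff algebra_simps)
  have v4: "SO_red V4 E4 = sqrt 2 * real n + (5 + 1 * sqrt 5 + 0 * sqrt 2 - 5 * sqrt 2)"
    using Aval[OF assms(5) assms(1), of 0 1 1 2 "n - 5"] assms(1)
    by (simp add: avec_def of_nat_diff algebra_simps)
  have v5: "SO_red V5 E5 = sqrt 2 * real n + (4 + 4 * sqrt 5 + 2 * sqrt 2 - 10 * sqrt 2)"
    using Aval[OF assms(6) assms(1), of 1 4 4 0 "n - 10"] assms(1)
    by (simp add: avec_def of_nat_diff algebra_simps)
  have v6: "SO_red V6 E6 = sqrt 2 * real n + (5 + 3 * sqrt 5 + 2 * sqrt 2 - 9 * sqrt 2)"
    using Aval[OF assms(7) assms(1), of 1 3 3 1 "n - 9"] assms(1)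
    by (simp add: avec_def of_nat_diff algebra_simps)
  have v7: "SO_red V7 E7 = sqrt 2 * real n + (4 + 6 * sqrt 5 + 0 * sqrt 2 - 11 * sqrt 2)"
    using Aval[OF assms(8) assms(1), of 0 6 4 0 "n - 11"] assms(1)
    by (simp add: avec_def of_nat_diff algebra_simps)
  have v8: "SO_red V8 E8 = sqrt 2 * real n + (6 + 2 * sqrt 5 + 2 * sqrt 2 - 8 * sqrt 2)"
    using Aval[OF assms(9) assms(1), of 1 2 2 2 "n - 8"] assms(1)
    by (simp add: avec_def of_nat_diff algebra_simps)
  have v9: "SO_red V9 E9 = sqrt 2 * real n + (5 + 5 * sqrt 5 + 0 * sqrt 2 - 10 * sqrt 2)"
    using Aval[OF assms(10) assms(1), of 0 5 3 1 "n - 10"] assms(1)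
    by (simp add: avec_def of_nat_diff algebra_simps)
  have v10: "SO_red V10 E10 = sqrt 2 * real n + (7 + 1 * sqrt 5 + 2 * sqrt 2 - 7 * sqrt 2)"
    using Aval[OF assms(11) assms(1), of 1 1 1 3 "n - 7"] assms(1)
    by (simp add: avec_def of_nat_diff algebra_simps)
  have v11: "SO_red V11 E11 = sqrt 2 * real n + (6 + 4 * sqrt 5 + 0 * sqrt 2 - 9 * sqrt 2)"
    using Aval[OF assms(12) assms(1), of 0 4 2 2 "n - 9"] assms(1)
    by (simp add: avec_def of_nat_diff algebra_simps)
  have v12: "SO_red V12 E12 = sqrt 2 * real n + (7 + 3 * sqrt 5 + 0 * sqrt 2 - 8 * sqrt 2)"
    using Aval[OF assms(13) assms(1), of 0 3 1 3 "n - 8"] assms(1)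
    by (simp add: avec_def of_nat_diff algebra_simps)
  have v13: "SO_red V13 E13 = sqrt 2 * real n + (8 + 2 * sqrt 5 + 0 * sqrt 2 - 7 * sqrt 2)"
    using Aval[OF assms(14) assms(1), of 0 2 0 4 "n - 7"] assms(1)
    by (simp add: avec_def of_nat_diff algebra_simps)
  have v14: "SO_red V14 E14 = sqrt 2 * real n + (5 + 5 * sqrt 5 - 9 * sqrt 2)"
  proof -
    have "(V14, E14) \<in> CT n" using assms(15) by (simp add: Omega_def)
    then interpret ctr V14 E14 n using assms(1) by unfold_locales
    show ?thesis using Oform[OF assms(15)] by (simp add: algebra_simps)
  qed
  have v15: "SO_red V E > sqrt 2 * real n + (5 + 5 * sqrt 5 - 9 * sqrt 2)"
  proof -
    interpret ctr V E n using assms(16) assms(1) by unfold_locales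
    show ?thesis using final[OF assms(17)] by (simp add: algebra_simps)
  qed
  note sb = sq_bounds
  show ?thesis
    unfolding v1 v2 v3 v4 v5 v6 v7 v8 v9 v10 v11 v12 v13 v14
    using v15 v14 sb(1-4) by simp
qed

end
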